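(* Let $(T(\mathcal{A})=\mathcal{A}\oplus\mathcal{A}^*,\ast,\omega)$ be a double construction of symplectic antiassociative algebra associated to $\mathcal{A}$ and $\mathcal{A}^*$. Then the formulas $\omega(u\succ v,w)=\omega(v,w\ast u)$, $\omega(u\prec v,w)=\omega(u,v\ast w)$ ($u,v,w\in T(\mathcal{A})$) define a compatible antidendriform algebra structure on $(T(\mathcal{A}),\ast)$, and $\mathcal{A}$ and $\mathcal{A}^*$ are antidendriform subalgebras of $(T(\mathcal{A}),\succ,\prec)$.
   Context: An antiassociative algebra is a vector space with bilinear product satisfying $(x\ast y)\ast z=-x\ast(y\ast z)$. Let $\mathcal{A}$ be a finite-dimensional vector space. A double construction of symplectic antiassociative algebra associated to antiassociative algebras $\mathcal{A}$ and $\mathcal{A}^*$ (on the dual space) is an antiassociative product $\ast$ on $\mathcal{A}\oplus\mathcal{A}^*$ such that $\mathcal{A}$ and $\mathcal{A}^*$ are subalgebras (with their given products) and the non-degenerate skew-symmetric form $\omega(x+a^*,y+b^* )=-\langle x,b^*\rangle+\langle a^*,y\rangle$ satisfies $\omega(u\ast v,w)+\omega(v\ast w,u)+\omega(w\ast u,v)=0$ for all $u,v,w$. An antidendriform algebra is a vector space with bilinear products $\prec,\succ$ such that, with $x\star y=x\prec y+x\succ y$: $(x\prec y)\prec z=-x\prec(y\star z)$, $(x\succ y)\prec z=-x\succ(y\prec z)$, $x\succ(y\succ z)=-(x\star y)\succ z$; it is compatible with $\ast$ if $x\succ y+x\prec y=x\ast y$. *)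

theory Defs
  imports "HOL-Analysis.Analysis"
begin

text \<open>The finite-dimensional space A is represented (after choosing a basis) as
 'k^'n for a finite index type 'n; its dual A* is represented by 'k^'n as well, the
 duality pairing being the standard one.\<close>

type_synonym ('k,'n) dbl = "('k^'n) \<times> ('k^'n)"

definition bilin :: "('k \<Rightarrow> 'v \<Rightarrow> 'v) \<Rightarrow> ('v::ab_group_add \<Rightarrow> 'v \<Rightarrow> 'v) \<Rightarrow> bool" where
  "bilin scl m \<longleftrightarrow>
     (\<forall>x y z. m (x + y) z = m x z + m y z) \<and>
     (\<forall>x y z. m x (y + z) = m x y + m x z) \<and>
     (\<forall>c x y. m (scl c x) y = scl c (m x y)) \<and>
     (\<forall>c x y. m x (scl c y) = scl c (m x y))"

definition antiassoc_alg :: "('k \<Rightarrow> 'v \<Rightarrow> 'v) \<Rightarrow> ('v::ab_group_add \<Rightarrow> 'v \<Rightarrow> 'v) \<Rightarrow> bool" where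
  "antiassoc_alg scl m \<longleftrightarrow> bilin scl m \<and> (\<forall>x y z. m (m x y) z = - m x (m y z))"

definition antidendriform :: "('k \<Rightarrow> 'v \<Rightarrow> 'v) \<Rightarrow> ('v::ab_group_add \<Rightarrow> 'v \<Rightarrow> 'v) \<Rightarrow> ('v \<Rightarrow> 'v \<Rightarrow> 'v) \<Rightarrow> bool" where
  "antidendriform scl prec succ \<longleftrightarrow> bilin scl prec \<and> bilin scl succ \<and>
     (\<forall>x y z. prec (prec x y) z = - prec x (prec y z + succ y z)) \<and>
     (\<forall>x y z. prec (succ x y) z = - succ x (prec y z)) \<and>
     (\<forall>x y z. succ x (succ y z) = - succ (prec x y + succ x y) z)"

definition vsc :: "'k::field \<Rightarrow> 'k^'n::finite \<Rightarrow> 'k^'n" where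
  "vsc c x = c *s x"

definition dsc :: "'k::field \<Rightarrow> ('k,'n::finite) dbl \<Rightarrow> ('k,'n) dbl" where
  "dsc c u = (c *s fst u, c *s snd u)"

definition pairing :: "'k::field^'n::finite \<Rightarrow> 'k^'n \<Rightarrow> 'k" where
  "pairing x a = (\<Sum>i\<in>UNIV. x $ i * a $ i)"

definition omega :: "('k::field,'n::finite) dbl \<Rightarrow> ('k,'n) dbl \<Rightarrow> 'k" where
  "omega u v = - pairing (fst u) (snd v) + pairing (snd u) (fst v)"

definition double_construction ::
  "('k::field^'n::finite \<Rightarrow> 'k^'n \<Rightarrow> 'k^'n) \<Rightarrow> ('k^'n \<Rightarrow> 'k^'n \<Rightarrow> 'k^'n)
   \<Rightarrow> (('k,'n) dbl \<Rightarrow> ('k,'n) dbl \<Rightarrow> ('k,'n) dbl) \<Rightarrow> bool" where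
  "double_construction mA mD m \<longleftrightarrow>
     antiassoc_alg vsc mA \<and> antiassoc_alg vsc mD \<and> antiassoc_alg dsc m \<and>
     (\<forall>x y. m (x, 0) (y, 0) = (mA x y, 0)) \<and>
     (\<forall>a b. m (0, a) (0, b) = (0, mD a b)) \<and>
     (\<forall>u v w. omega (m u v) w + omega (m v w) u + omega (m w u) v = 0)"

end

theory Submission
  imports Defs "HOL-Library.Product_Plus"
begin

lemma pairing_axis: "pairing x (axis i 1) = x $ i"
  unfolding pairing_def axis_def by (simp add: if_distrib cong: if_cong)

lemma pairing_add1: "pairing (x + y) a = pairing x a + pairing y a"
  unfolding pairing_def by (simp add: sum.distrib distrib_right)
lemma pairing_add2: "pairing a (x + y) = pairing a x + pairing a y"
  unfolding pairing_def by (simp add: sum.distrib distrib_left)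
lemma pairing_sc1: "pairing (c *s x) a = c * pairing x a"
  unfolding pairing_def by (simp add: sum_distrib_left mult.assoc)
lemma pairing_sc2: "pairing a (c *s x) = c * pairing a x"
  unfolding pairing_def by (simp add: sum_distrib_left mult.left_commute)

lemma omega_add1: "omega (u + v) w = omega u w + omega v w"
  unfolding omega_def by (simp add: pairing_add1)
lemma omega_add2: "omega w (u + v) = omega w u + omega w v"
  unfolding omega_def by (simp add: pairing_add2)
lemma omega_sc1: "omega (dsc c u) w = c * omega u w"
  unfolding omega_def dsc_def by (simp add: pairing_sc1 algebra_simps)
lemma omega_sc2: "omega w (dsc c u) = c * omega w u"
  unfolding omega_def dsc_def by (simp add: pairing_sc2 algebra_simps)
lemma omega_skew: "omega u v = - omega v u"
  unfolding omega_def pairing_def by (simp add: mult.commute)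

lemma pairing_zero: "pairing x 0 = 0" "pairing 0 x = 0"
  unfolding pairing_def by simp_all
lemma pairing_neg: "pairing a (- b) = - pairing a b"
  unfolding pairing_def by (simp add: sum_negf)
lemma pairing_neg1: "pairing (- b) a = - pairing b a"
  unfolding pairing_def by (simp add: sum_negf)
lemma omega_neg1: "omega (- u) w = - omega u w"
  unfolding omega_def by (simp add: pairing_neg1)
lemma omega_e1: "omega z (axis i 1, 0) = snd z $ i"
  unfolding omega_def by (simp add: pairing_axis pairing_zero)
lemma omega_e2: "omega z (0, axis i 1) = - fst z $ i"
  unfolding omega_def by (simp add: pairing_axis pairing_zero)

lemma omega_ext:
  fixes a b :: "('k::field,'n::finite) dbl"
  assumes "\<And>w. omega a w = omega b w" shows "a = b"
proof -
  have "snd a $ i = snd b $ i" for i using assms[of "(axis i 1, 0)"] by (simp add: omega_e1)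
  moreover have "fst a $ i = fst b $ i" for i using assms[of "(0, axis i 1)"] by (simp add: omega_e2)
  ultimately show ?thesis by (simp add: prod_eq_iff vec_eq_iff)
qed

definition rep :: "(('k::field,'n::finite) dbl \<Rightarrow> 'k) \<Rightarrow> ('k,'n) dbl" where
  "rep f = ((\<chi> i. - f (0, axis i 1)), (\<chi> i. f (axis i 1, 0)))"

lemma dbl_expand:
  fixes w :: "('k::field,'n::finite) dbl"
  shows "w = (\<Sum>i\<in>UNIV. dsc (fst w $ i) (axis i 1, 0)) + (\<Sum>i\<in>UNIV. dsc (snd w $ i) (0, axis i 1))"
  by (simp add: prod_eq_iff fst_sum snd_sum dsc_def basis_expansion)

lemma rep_works:
  fixes f :: "('k::field,'n::finite) dbl \<Rightarrow> 'k"
  assumes add: "\<And>x y. f (x + y) = f x + f y" and sc: "\<And>c x. f (dsc c x) = c * f x"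
  shows "omega (rep f) w = f w"
proof -
  have f0: "f 0 = 0" using add[of 0 0] by (metis add.right_neutral add_cancel_left_right)
  have "f w = f (\<Sum>i\<in>UNIV. dsc (fst w $ i) (axis i 1, 0)) + f (\<Sum>i\<in>UNIV. dsc (snd w $ i) (0, axis i 1))"
    by (subst dbl_expand) (rule add)
  also have "\<dots> = (\<Sum>i\<in>UNIV. fst w $ i * f (axis i 1, 0)) + (\<Sum>i\<in>UNIV. snd w $ i * f (0, axis i 1))"
  proof -
    have hs: "\<And>g A. f (sum g A) = (\<Sum>x\<in>A. f (g x))"
      using sum_comp_morphism[of f, OF f0 add, symmetric] by (simp add: o_def)
    show ?thesis by (simp only: hs sc)
  qed
  also have "\<dots> = omega (rep f) w"
    unfolding omega_def rep_def pairing_def by (simp add: sum_negf mult.commute)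
  finally show ?thesis by simp
qed

theorem mainTheorem12:
  fixes mA mD :: "'k::field^'n::finite \<Rightarrow> 'k^'n \<Rightarrow> 'k^'n"
    and m :: "('k,'n) dbl \<Rightarrow> ('k,'n) dbl \<Rightarrow> ('k,'n) dbl"
  assumes "double_construction mA mD m"
  shows "(\<exists>succ prec :: ('k,'n) dbl \<Rightarrow> ('k,'n) dbl \<Rightarrow> ('k,'n) dbl.
            (\<forall>u v w. omega (succ u v) w = omega v (m w u)) \<and>
            (\<forall>u v w. omega (prec u v) w = omega u (m v w)))
      \<and> (\<forall>succ prec :: ('k,'n) dbl \<Rightarrow> ('k,'n) dbl \<Rightarrow> ('k,'n) dbl.
            (\<forall>u v w. omega (succ u v) w = omega v (m w u)) \<and>
            (\<forall>u v w. omega (prec u v) w = omega u (m v w)) \<longrightarrow>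
              antidendriform dsc prec succ \<and>
              (\<forall>u v. succ u v + prec u v = m u v) \<and>
              (\<forall>x y. snd (succ (x, 0) (y, 0)) = 0 \<and> snd (prec (x, 0) (y, 0)) = 0) \<and>
              (\<forall>a b. fst (succ (0, a) (0, b)) = 0 \<and> fst (prec (0, a) (0, b)) = 0))"
proof -
  from assms have bl: "bilin dsc m" and aa: "\<And>x y z. m (m x y) z = - m x (m y z)"
    and mA: "\<And>x y. m (x, 0) (y, 0) = (mA x y, 0)" and mD: "\<And>a b. m (0, a) (0, b) = (0, mD a b)"
    and cyc: "\<And>u v w. omega (m u v) w + omega (m v w) u + omega (m w u) v = 0"
    unfolding double_construction_def antiassoc_alg_def by auto
  from bl have ml1: "\<And>x y z. m (x + y) z = m x z + m y z" and ml2: "\<And>x y z. m x (y + z) = m x y + m x z"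
    and ms1: "\<And>c x y. m (dsc c x) y = dsc c (m x y)" and ms2: "\<And>c x y. m x (dsc c y) = dsc c (m x y)"
    unfolding bilin_def by auto
  have ex: "\<exists>succ prec :: ('k,'n) dbl \<Rightarrow> ('k,'n) dbl \<Rightarrow> ('k,'n) dbl.
            (\<forall>u v w. omega (succ u v) w = omega v (m w u)) \<and>
            (\<forall>u v w. omega (prec u v) w = omega u (m v w))"
  proof (intro exI conjI allI)
    fix u v w
    show "omega (rep (\<lambda>w. omega v (m w u))) w = omega v (m w u)"
      by (rule rep_works) (simp_all add: ml1 ms1 omega_add2 omega_sc2)
    show "omega (rep (\<lambda>w. omega u (m v w))) w = omega u (m v w)"
      by (rule rep_works) (simp_all add: ml2 ms2 omega_add2 omega_sc2)
  qed
  have neg: "\<And>a b. omega a (- b) = - omega a b"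
    unfolding omega_def by (simp add: pairing_neg)
  show ?thesis
  proof (intro conjI ex allI impI)
    fix succ prec :: "('k,'n) dbl \<Rightarrow> ('k,'n) dbl \<Rightarrow> ('k,'n) dbl"
    assume "(\<forall>u v w. omega (succ u v) w = omega v (m w u)) \<and>
            (\<forall>u v w. omega (prec u v) w = omega u (m v w))"
    then have S: "\<And>u v w. omega (succ u v) w = omega v (m w u)"
      and P: "\<And>u v w. omega (prec u v) w = omega u (m v w)" by auto
    have sm: "succ u v + prec u v = m u v" for u v
    proof (rule omega_ext)
      fix w
      have "omega (succ u v + prec u v) w = omega v (m w u) + omega u (m v w)"
        by (simp add: omega_add1 S P)
      also have "\<dots> = omega (m u v) w"
      proof -
        have c: "omega (m u v) w = -(omega (m v w) u + omega (m w u) v)"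
          using cyc[of u v w] by (metis add.assoc eq_neg_iff_add_eq_0)
        show ?thesis unfolding c omega_skew[of v "m w u"] omega_skew[of u "m v w"]
          by (simp add: add.commute)
      qed
      finally show "omega (succ u v + prec u v) w = omega (m u v) w" .
    qed
    then show "succ u v + prec u v = m u v" for u v .
    from sm have sp: "\<And>u v. prec u v + succ u v = m u v" by (simp add: add.commute)
    have bS: "bilin dsc succ" unfolding bilin_def
      by (intro conjI allI; rule omega_ext)
         (simp_all add: S omega_add1 omega_add2 ml1 ml2 ms1 ms2 omega_sc1 omega_sc2)
    have bP: "bilin dsc prec" unfolding bilin_def
      by (intro conjI allI; rule omega_ext)
         (simp_all add: P omega_add1 omega_add2 ml1 ml2 ms1 ms2 omega_sc1 omega_sc2)
    show "antidendriform dsc prec succ" unfolding antidendriform_def sp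
      by (intro conjI bS bP allI; rule omega_ext) (simp_all add: S P aa neg omega_neg1)
    show "snd (succ (x, 0) (y, 0)) = 0" for x y
    proof -
      have "snd (succ (x,0) (y,0)) $ i = 0" for i
        using S[of "(x,0)" "(y,0)" "(axis i 1, 0)"] by (simp add: omega_e1 mA omega_def pairing_zero pairing_axis)
      then show ?thesis by (simp add: vec_eq_iff)
    qed
    show "snd (prec (x, 0) (y, 0)) = 0" for x y
    proof -
      have "snd (prec (x,0) (y,0)) $ i = 0" for i
        using P[of "(x,0)" "(y,0)" "(axis i 1, 0)"] by (simp add: omega_e1 mA omega_def pairing_zero pairing_axis)
      then show ?thesis by (simp add: vec_eq_iff)
    qed
    show "fst (succ (0, a) (0, b)) = 0" for a b
    proof -
      have "fst (succ (0,a) (0,b)) $ i = 0" for i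
        using S[of "(0,a)" "(0,b)" "(0, axis i 1)"] by (simp add: omega_e2 mD omega_def pairing_zero pairing_axis)
      then show ?thesis by (simp add: vec_eq_iff)
    qed
    show "fst (prec (0, a) (0, b)) = 0" for a b
    proof -
      have "fst (prec (0,a) (0,b)) $ i = 0" for i
        using P[of "(0,a)" "(0,b)" "(0, axis i 1)"] by (simp add: omega_e2 mD omega_def pairing_zero pairing_axis)
      then show ?thesis by (simp add: vec_eq_iff)
    qed
  qed
qed

end
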